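(* Let $G$ be a connected graph with at least $5$ vertices and let $H$ be a connected component of the complement $\overline{G}$ such that $H$ is isomorphic to the path $P_4$ on $4$ vertices. Then no vertex of $H$ is a basis forced vertex of $G$.
   Context: All graphs are finite and simple. $\overline{G}$ denotes the complement graph. For vertices $u,v$ of a connected graph $G$, $d(u,v)$ is the length of a shortest $u$–$v$ path. A set $R\subseteq V(G)$ is a resolving set if for all distinct $x,y\in V(G)$ there is $r\in R$ with $d(r,x)\neq d(r,y)$. The metric dimension $\dim(G)$ is the minimum cardinality of a resolving set, and a resolving set of cardinality $\dim(G)$ is a metric basis. A vertex is a basis forced vertex if it belongs to every metric basis of $G$. *)

theory Defs
  imports Main
begin

definition simple_graph :: "'a set \<Rightarrow> ('a \<Rightarrow> 'a \<Rightarrow> bool) \<Rightarrow> bool" where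
  "simple_graph V E \<longleftrightarrow> finite V \<and> (\<forall>u v. E u v \<longrightarrow> u \<in> V \<and> v \<in> V)
     \<and> (\<forall>u v. E u v \<longrightarrow> E v u) \<and> (\<forall>v. \<not> E v v)"

definition edge_rel :: "('a \<Rightarrow> 'a \<Rightarrow> bool) \<Rightarrow> ('a \<times> 'a) set" where
  "edge_rel E = {(u, v). E u v}"

definition gconnected :: "'a set \<Rightarrow> ('a \<Rightarrow> 'a \<Rightarrow> bool) \<Rightarrow> bool" where
  "gconnected V E \<longleftrightarrow> V \<noteq> {} \<and> (\<forall>u\<in>V. \<forall>v\<in>V. (u, v) \<in> (edge_rel E)\<^sup>*)"

definition gdist :: "('a \<Rightarrow> 'a \<Rightarrow> bool) \<Rightarrow> 'a \<Rightarrow> 'a \<Rightarrow> nat" where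
  "gdist E u v = (LEAST n. (u, v) \<in> (edge_rel E) ^^ n)"

definition resolving_set :: "'a set \<Rightarrow> ('a \<Rightarrow> 'a \<Rightarrow> bool) \<Rightarrow> 'a set \<Rightarrow> bool" where
  "resolving_set V E R \<longleftrightarrow> R \<subseteq> V \<and>
     (\<forall>x\<in>V. \<forall>y\<in>V. x \<noteq> y \<longrightarrow> (\<exists>r\<in>R. gdist E r x \<noteq> gdist E r y))"

definition metric_dim :: "'a set \<Rightarrow> ('a \<Rightarrow> 'a \<Rightarrow> bool) \<Rightarrow> nat" where
  "metric_dim V E = (LEAST k. \<exists>R. resolving_set V E R \<and> card R = k)"

definition metric_basis :: "'a set \<Rightarrow> ('a \<Rightarrow> 'a \<Rightarrow> bool) \<Rightarrow> 'a set \<Rightarrow> bool" where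
  "metric_basis V E R \<longleftrightarrow> resolving_set V E R \<and> card R = metric_dim V E"

definition basis_forced :: "'a set \<Rightarrow> ('a \<Rightarrow> 'a \<Rightarrow> bool) \<Rightarrow> 'a \<Rightarrow> bool" where
  "basis_forced V E v \<longleftrightarrow> v \<in> V \<and> (\<forall>R. metric_basis V E R \<longrightarrow> v \<in> R)"

definition compl_graph :: "'a set \<Rightarrow> ('a \<Rightarrow> 'a \<Rightarrow> bool) \<Rightarrow> 'a \<Rightarrow> 'a \<Rightarrow> bool" where
  "compl_graph V E u v \<longleftrightarrow> u \<in> V \<and> v \<in> V \<and> u \<noteq> v \<and> \<not> E u v"

text \<open>Vertex set of a connected component: an equivalence class of reachability.
  The component itself is the subgraph induced on it.\<close>

definition component_of :: "'a set \<Rightarrow> ('a \<Rightarrow> 'a \<Rightarrow> bool) \<Rightarrow> 'a set \<Rightarrow> bool" where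
  "component_of V E C \<longleftrightarrow> (\<exists>v\<in>V. C = {u \<in> V. (v, u) \<in> (edge_rel E)\<^sup>*})"

definition P4_edge :: "nat \<Rightarrow> nat \<Rightarrow> bool" where
  "P4_edge i j \<longleftrightarrow> i < 4 \<and> j < 4 \<and> (i = j + 1 \<or> j = i + 1)"

definition induced_iso_P4 :: "('a \<Rightarrow> 'a \<Rightarrow> bool) \<Rightarrow> 'a set \<Rightarrow> bool" where
  "induced_iso_P4 E C \<longleftrightarrow> (\<exists>f. bij_betw f {0..<4::nat} C \<and>
     (\<forall>i<4. \<forall>j<4. E (f i) (f j) \<longleftrightarrow> P4_edge i j))"

end

theory Submission
  imports Defs
begin

lemma gdist_0: "gdist E u u = 0"
  unfolding gdist_def by (rule Least_eq_0) simp

lemma gdist_1: assumes "E u v" "u \<noteq> v" shows "gdist E u v = 1"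
  unfolding gdist_def
proof (rule Least_equality)
  show "(u, v) \<in> edge_rel E ^^ 1" using assms by (simp add: edge_rel_def)
next
  fix m assume "(u, v) \<in> edge_rel E ^^ m"
  then show "1 \<le> m" using assms by (cases m) auto
qed

lemma gdist_2: assumes "\<not> E u v" "u \<noteq> v" "E u w" "E w v" shows "gdist E u v = 2"
  unfolding gdist_def
proof (rule Least_equality)
  show "(u, v) \<in> edge_rel E ^^ 2" using assms
    by (auto simp add: edge_rel_def numeral_2_eq_2 relcomp_unfold)
next
  fix m assume m: "(u, v) \<in> edge_rel E ^^ m"
  show "2 \<le> m"
  proof (rule ccontr)
    assume "\<not> 2 \<le> m"
    then have "m = 0 \<or> m = 1" by auto
    then show False using m assms by (auto simp: edge_rel_def)
  qed
qed

lemma key: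
  assumes sg: "simple_graph V E" and CV: "C \<subseteq> V"
    and out: "\<forall>s\<in>C. \<forall>y\<in>V-C. gdist E s y = 1 \<and> gdist E y s = 1"
    and mb: "metric_basis V E R" and vR: "v \<in> R" and vC: "v \<in> C"
    and SC: "S \<subseteq> C" and vS: "v \<notin> S" and cS: "card S = 2"
    and res: "\<forall>x\<in>C. \<forall>y\<in>C. x \<noteq> y \<longrightarrow> (\<exists>s\<in>S. gdist E s x \<noteq> gdist E s y)"
    and cov: "\<forall>x\<in>C. \<exists>s\<in>S. gdist E s x \<noteq> 1"
    and bad: "x0 \<in> C" "y0 \<in> C" "x0 \<noteq> y0" "gdist E v x0 = gdist E v y0"
  shows "\<exists>R'. metric_basis V E R' \<and> v \<notin> R'"
proof -
  have finV: "finite V" using sg by (simp add: simple_graph_def)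
  have RV: "R \<subseteq> V" and Rres: "\<forall>x\<in>V. \<forall>y\<in>V. x \<noteq> y \<longrightarrow> (\<exists>r\<in>R. gdist E r x \<noteq> gdist E r y)"
    using mb by (auto simp: metric_basis_def resolving_set_def)
  have finR: "finite R" using RV finV finite_subset by blast
  have finC: "finite C" using CV finV finite_subset by blast
  have finS: "finite S" using SC finC finite_subset by blast
  define T where "T = R - C"
  have finT: "finite T" using finR T_def by simp
  have resR'': "resolving_set V E (S \<union> T)"
    unfolding resolving_set_def
  proof (intro conjI ballI impI)
    show "S \<union> T \<subseteq> V" using SC CV RV T_def by auto
  next
    fix x y assume xV: "x \<in> V" and yV: "y \<in> V" and xy: "x \<noteq> y"
    show "\<exists>r\<in>S \<union> T. gdist E r x \<noteq> gdist E r y"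
    proof (cases "x \<in> C")
      case xC: True
      show ?thesis
      proof (cases "y \<in> C")
        case True then show ?thesis using res xC xy by blast
      next
        case False
        from cov xC obtain s where "s \<in> S" "gdist E s x \<noteq> 1" by blast
        moreover have "gdist E s y = 1" using out SC \<open>s \<in> S\<close> False yV by blast
        ultimately show ?thesis by (metis UnI1)
      qed
    next
      case xC: False
      show ?thesis
      proof (cases "y \<in> C")
        case True
        from cov True obtain s where "s \<in> S" "gdist E s y \<noteq> 1" by blast
        moreover have "gdist E s x = 1" using out SC \<open>s \<in> S\<close> xC xV by blast
        ultimately show ?thesis by (metis UnI1)
      next
        case False
        from Rres xV yV xy obtain r where r: "r \<in> R" "gdist E r x \<noteq> gdist E r y" by blast
        have "r \<notin> C"
        proof
          assume "r \<in> C"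
          then have "gdist E r x = 1" "gdist E r y = 1" using out xV yV xC False by auto
          then show False using r by simp
        qed
        then show ?thesis using r T_def by auto
      qed
    qed
  qed
  have dimle: "metric_dim V E \<le> card (S \<union> T)"
    unfolding metric_dim_def by (rule Least_le) (use resR'' in blast)
  have cR: "card R = metric_dim V E" using mb by (simp add: metric_basis_def)
  have c1: "card (S \<union> T) = card S + card T"
    by (rule card_Un_disjoint) (use finS finT SC T_def in auto)
  have c2: "card R = card (R \<inter> C) + card T"
  proof -
    have "R = (R \<inter> C) \<union> T" using T_def by auto
    then have "card R = card ((R \<inter> C) \<union> T)" by simp
    also have "\<dots> = card (R \<inter> C) + card T"
      by (rule card_Un_disjoint) (use finR finT T_def in auto)
    finally show ?thesis .
  qed
  have ge2: "card (R \<inter> C) \<ge> 2"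
  proof (rule ccontr)
    assume "\<not> 2 \<le> card (R \<inter> C)"
    then have "card (R \<inter> C) \<le> 1" by simp
    moreover have "v \<in> R \<inter> C" using vR vC by simp
    moreover have "finite (R \<inter> C)" using finR by simp
    ultimately have RC: "\<forall>x\<in>R \<inter> C. x = v"
      using card_le_Suc0_iff_eq[of "R \<inter> C"] by auto
    from Rres bad CV obtain r where r: "r \<in> R" "gdist E r x0 \<noteq> gdist E r y0" by blast
    show False
    proof (cases "r \<in> C")
      case True
      then have "r = v" using RC r by auto
      then show False using r bad by simp
    next
      case False
      then have "gdist E r x0 = 1" "gdist E r y0 = 1" using out bad RV r by auto
      then show False using r by simp
    qed
  qed
  have "card (S \<union> T) = card R" using dimle cR c1 c2 ge2 cS by linarith
  then have "metric_basis V E (S \<union> T)" using resR'' cR by (simp add: metric_basis_def)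
  moreover have "v \<notin> S \<union> T" using vS vC T_def by auto
  ultimately show ?thesis by blast
qed

theorem lemma7:
  fixes V :: "'a set" and E :: "'a \<Rightarrow> 'a \<Rightarrow> bool" and C :: "'a set"
  assumes "simple_graph V E"
    and "gconnected V E"
    and "card V \<ge> 5"
    and "component_of V (compl_graph V E) C"
    and "induced_iso_P4 (compl_graph V E) C"
  shows "\<forall>v\<in>C. \<not> basis_forced V E v"
proof -
  have sg: "finite V" "\<And>u v. E u v \<Longrightarrow> u \<in> V \<and> v \<in> V" "\<And>u v. E u v \<Longrightarrow> E v u" "\<And>v. \<not> E v v"
    using assms(1) by (auto simp: simple_graph_def)
  obtain r where rV: "r \<in> V" and Cdef: "C = {u \<in> V. (r, u) \<in> (edge_rel (compl_graph V E))\<^sup>*}"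
    using assms(4) by (auto simp: component_of_def)
  have CV: "C \<subseteq> V" using Cdef by auto
  obtain f where bij: "bij_betw f {0..<4::nat} C"
    and fE: "\<forall>i<4. \<forall>j<4. compl_graph V E (f i) (f j) \<longleftrightarrow> P4_edge i j"
    using assms(5) by (auto simp: induced_iso_P4_def)
  define a where "a = f 0"
  define b where "b = f 1"
  define c where "c = f 2"
  define d where "d = f 3"
  have "{0..<4::nat} = {0,1,2,3}" by auto
  then have Ceq: "C = {a,b,c,d}" using bij unfolding a_def b_def c_def d_def bij_betw_def by auto
  have inj: "inj_on f {0..<4}" using bij by (simp add: bij_betw_def)
  have dist: "a \<noteq> b" "a \<noteq> c" "a \<noteq> d" "b \<noteq> c" "b \<noteq> d" "c \<noteq> d"
    unfolding a_def b_def c_def d_def using inj by (auto dest: inj_onD)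
  have inV: "a \<in> V" "b \<in> V" "c \<in> V" "d \<in> V" using CV Ceq by auto
  have Eiff: "E (f i) (f j) \<longleftrightarrow> \<not> P4_edge i j" if "i < 4" "j < 4" "i \<noteq> j" for i j
  proof -
    have "f i \<in> C" "f j \<in> C" "f i \<noteq> f j" using that bij inj
      by (auto simp: bij_betw_def dest: inj_onD)
    then show ?thesis using fE that CV by (auto simp: compl_graph_def)
  qed
  have Es: "E a c" "E a d" "E b d" "\<not> E a b" "\<not> E b c" "\<not> E c d"
    unfolding a_def b_def c_def d_def
    by (simp_all add: Eiff P4_edge_def)
  have Eout: "E x y" if "x \<in> C" "y \<in> V - C" for x y
  proof (rule ccontr)
    assume "\<not> E x y"
    then have "compl_graph V E x y" using that CV by (auto simp: compl_graph_def)
    then have "(x, y) \<in> edge_rel (compl_graph V E)" by (simp add: edge_rel_def)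
    moreover have "(r, x) \<in> (edge_rel (compl_graph V E))\<^sup>*" using that Cdef by auto
    ultimately have "(r, y) \<in> (edge_rel (compl_graph V E))\<^sup>*" by auto
    then show False using that Cdef by auto
  qed
  have cardC: "card C = 4" using bij bij_betw_same_card by fastforce
  have "V - C \<noteq> {}"
  proof
    assume "V - C = {}"
    then have "V \<subseteq> C" by auto
    then have "card V \<le> card C" by (rule card_mono[OF finite_subset[OF CV sg(1)]])
    then show False using cardC assms(3) by simp
  qed
  then obtain w where w: "w \<in> V - C" by blast
  have dC: "gdist E x y = (if x = y then 0 else if E x y then 1 else 2)" if "x \<in> C" "y \<in> C" for x y
  proof -
    have "E x w" "E w y" using Eout that w sg(3) by blast+
    then show ?thesis using gdist_0 gdist_1 gdist_2 by auto
  qed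
  have out: "\<forall>s\<in>C. \<forall>y\<in>V-C. gdist E s y = 1 \<and> gdist E y s = 1"
  proof (intro ballI)
    fix s y assume "s \<in> C" "y \<in> V - C"
    moreover have "E s y" "E y s" using Eout sg(3) calculation by blast+
    moreover have "s \<noteq> y" using calculation by auto
    ultimately show "gdist E s y = 1 \<and> gdist E y s = 1" using gdist_1 by metis
  qed
  have gne: "gdist E x y \<noteq> 0" if "x \<in> V" "y \<in> V" "x \<noteq> y" for x y
  proof
    assume g0: "gdist E x y = 0"
    have "(x, y) \<in> (edge_rel E)\<^sup>*" using assms(2) that by (auto simp: gconnected_def)
    then obtain n where "(x, y) \<in> edge_rel E ^^ n" using rtrancl_power by blast
    then have "(x, y) \<in> edge_rel E ^^ gdist E x y" unfolding gdist_def by (rule LeastI)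
    then show False using g0 that by simp
  qed
  have "resolving_set V E V"
    unfolding resolving_set_def using gne gdist_0 by (metis order_refl)
  then have "\<exists>k R. resolving_set V E R \<and> card R = k" by blast
  then have "\<exists>R. resolving_set V E R \<and> card R = metric_dim V E"
    unfolding metric_dim_def by (rule LeastI_ex)
  then obtain R0 where R0: "resolving_set V E R0 \<and> card R0 = metric_dim V E" by blast
  then have mb0: "metric_basis V E R0" by (simp add: metric_basis_def)
  show ?thesis
  proof (intro ballI notI)
    fix v assume vC: "v \<in> C" and bf: "basis_forced V E v"
    have vR: "v \<in> R0" using bf mb0 by (auto simp: basis_forced_def)
    have "\<exists>R'. metric_basis V E R' \<and> v \<notin> R'"
    proof -
      have v4: "v = a \<or> v = b \<or> v = c \<or> v = d" using vC Ceq by auto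
      have sym: "E x y = E y x" for x y using sg(3) by blast
      have inC: "a \<in> C" "b \<in> C" "c \<in> C" "d \<in> C" using Ceq by auto
      note dist2 = dist dist[symmetric]
      have Es2: "E c a" "E d a" "E d b" "\<not> E b a" "\<not> E c b" "\<not> E d c" using Es sg(3) by blast+
      have tab: "gdist E a a = 0" "gdist E a b = 2" "gdist E a c = 1" "gdist E a d = 1"
        "gdist E b a = 2" "gdist E b b = 0" "gdist E b c = 2" "gdist E b d = 1"
        "gdist E c a = 1" "gdist E c b = 2" "gdist E c c = 0" "gdist E c d = 2"
        "gdist E d a = 1" "gdist E d b = 1" "gdist E d c = 2" "gdist E d d = 0"
        using inC dist2 Es Es2 by (simp_all add: dC)
      have SBC: "{b,c} \<subseteq> C" "card {b,c} = 2"
        "\<forall>x\<in>C. \<forall>y\<in>C. x \<noteq> y \<longrightarrow> (\<exists>s\<in>{b,c}. gdist E s x \<noteq> gdist E s y)"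
        "\<forall>x\<in>C. \<exists>s\<in>{b,c}. gdist E s x \<noteq> 1"
        unfolding Ceq using dist2 by (simp_all add: tab)
      have SAD: "{a,d} \<subseteq> C" "card {a,d} = 2"
        "\<forall>x\<in>C. \<forall>y\<in>C. x \<noteq> y \<longrightarrow> (\<exists>s\<in>{a,d}. gdist E s x \<noteq> gdist E s y)"
        "\<forall>x\<in>C. \<exists>s\<in>{a,d}. gdist E s x \<noteq> 1"
        unfolding Ceq using dist2 by (simp_all add: tab)
      from v4 show ?thesis
      proof (elim disjE)
        assume "v = a"
        moreover have "gdist E a c = gdist E a d" by (simp add: tab)
        ultimately show ?thesis
          using key[OF assms(1) CV out mb0 vR vC SBC(1) _ SBC(2) SBC(3) SBC(4) inC(3) inC(4) dist(6)]
            dist2 by auto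
      next
        assume "v = b"
        moreover have "gdist E b a = gdist E b c" by (simp add: tab)
        ultimately show ?thesis
          using key[OF assms(1) CV out mb0 vR vC SAD(1) _ SAD(2) SAD(3) SAD(4) inC(1) inC(3) dist(2)]
            dist2 by auto
      next
        assume "v = c"
        moreover have "gdist E c b = gdist E c d" by (simp add: tab)
        ultimately show ?thesis
          using key[OF assms(1) CV out mb0 vR vC SAD(1) _ SAD(2) SAD(3) SAD(4) inC(2) inC(4) dist(5)]
            dist2 by auto
      next
        assume "v = d"
        moreover have "gdist E d a = gdist E d b" by (simp add: tab)
        ultimately show ?thesis
          using key[OF assms(1) CV out mb0 vR vC SBC(1) _ SBC(2) SBC(3) SBC(4) inC(1) inC(2) dist(1)]
            dist2 by auto
      qed
    qed
    then show False using bf by (auto simp: basis_forced_def)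
  qed
qed

end
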